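(* Let $0<\epsilon<1$, $\epsilon_3=\frac{\epsilon}{2|V(H)|}$ and $\epsilon_4=\frac{\epsilon_3}{4k-2}$. For $u,v\in V(H)$, if the shortest path $\pi_{G-D}(u,v)$ is $\epsilon_3$-far away from $V(H)$, then it is an $\epsilon_4$-segment expath.
   Context: $G=(V,E)$ is an undirected graph with $n\ge3$ vertices and real edge weights in $[1,W]$; shortest paths in every subgraph are assumed unique; $\pi_{G'}(x,y)$ is the shortest $x$-$y$ path in $G'$, $\delta_{G'}$ its length, $|P|$ the weighted length of a path $P$, $P[a,b]$ the subpath between $a,b$, and $G-R$ the graph with vertex set $R$ deleted. Let $k=\ln n$. For $R\subseteq V$, $S\subseteq V\setminus R$, an $S$-restricted tree cover of $G-R$ is a family $\{T(w):w\in S\}$ of trees, $T(w)$ a subtree of $G-R$ rooted at $w$, such that (i) for all $u\in S$, $v\in V\setminus R$ there is $w\in S$ with $u,v\in V(T(w))$ and $\mathrm{dep}_{T(w)}(u)+\mathrm{dep}_{T(w)}(v)\le(2k-1)\delta_{G-R}(u,v)$ ($\mathrm{dep}_T(x)$ = weighted distance from $x$ to the root); (ii) each vertex lies in at most $kn^{1/k}(\ln n+1)$ trees. A vertex of such a tree $T$ is a trunk vertex if it lies on the $T$-path between two vertices of $S$; $\mathrm{Trunk}(T)$ is the subtree induced by trunk vertices; $\mathrm{pdeg}_T(v)$ is the degree of $v$ in $\mathrm{Trunk}(T)$ (0 if not trunk). Fix an integer $d\ge2$, a constant $c\ge1$, $s=4e d^{c+1}\ln^2 n+1$; $\mathrm{Hi}(\mathcal{C})$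 is the set of vertices of pseudo-degree $>s$ in some tree of a tree cover $\mathcal{C}$. Fixed tree covers: $\mathcal{T}(S)$ ($S$-restricted, of $G$) and $\mathcal{T}_R(S)$ ($(S\setminus R)$-restricted, of $G-R$), $\mathcal{T}_\varnothing(S)=\mathcal{T}(S)$. Hierarchy tree: root $V$; a node $U$ is a leaf if $\mathrm{Hi}(\mathcal{T}(U))=\varnothing$, else it has children $W_1=\mathrm{Hi}(\mathcal{T}(U))$, $W_i=W_{i-1}\cup\mathrm{Hi}(\mathcal{T}_{W_{i-1}}(U))$ ($2\le i\le d$), recursively. Let $D\subseteq V$, $|D|\le d$, and fix a root-to-node path $V=U_1,\dots,U_p$ in the hierarchy tree, $U_{p+1}=\varnothing$, such that every $f\in D$ has pseudo-degree $\le s$ in every tree of $\mathcal{T}:=\bigcup_{i=1}^p\mathcal{T}_{U_{i+1}}(U_i)$. The level $l(v)$ is the largest $l$ with $v\in U_l$; $G_i$ is the subgraph of $G$ induced by the vertices of level $\le i$. Let $s_0,t_0\in V\setminus D$ be query vertices; for $f\in D$, $T\in\mathcal{T}$ containing $f$, $N_T(f)=\{\mathrm{parent}_T(f)\}\cup(\mathrm{children}_T(f)\cap\mathrm{Trunk}(T))$, $N(f)=\bigcup_T N_T(f)$, and $V(H)=(\{s_0,t_0\}\cup\bigcup_{f\in D}N(f))\setminus D$. A path $P$ from $a$ to $b$ is $\eta$-far away from $V(H)$ if there are no $x\in P\setminus\{a,b\}$, $w\in V(H)$ with $\delta_{G-D}(x,w)\le\eta\cdot\min\{|P[a,x]|,|P[x,b]|\}$.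 $\eta$-segments: for $P=(a=v_0,\dots,v_\ell=b)$ and $1\le i,j<\ell$, $v_i,v_j$ are in the same $\eta$-segment if either both $|P[a,v_i]|,|P[a,v_j]|\le|P|/2$ and $\lfloor\log_{1+\eta}|P[a,v_i]|\rfloor=\lfloor\log_{1+\eta}|P[a,v_j]|\rfloor$, or both $|P[v_i,b]|,|P[v_j,b]|<|P|/2$ and $\lfloor\log_{1+\eta}|P[v_i,b]|\rfloor=\lfloor\log_{1+\eta}|P[v_j,b]|\rfloor$; the classes are contiguous subpaths, and $a,b$ are in no segment. A path $P$ is an $\eta$-segment expath if for every $\eta$-segment $P[x,y]$ of $P$ there is $1\le i\le p$ such that $P[x,y]$ is a shortest path in $G_i$. *)

theory Defs
  imports Complex_Main "HOL-Library.Extended_Real"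
begin

text \<open>A (sub)graph is given by a vertex set X and a set F of undirected edges
(two-element vertex sets). Edge weights are given by wt.\<close>

definition is_walk :: "'a set \<Rightarrow> 'a set set \<Rightarrow> 'a list \<Rightarrow> 'a \<Rightarrow> 'a \<Rightarrow> bool" where
  "is_walk X F q a b \<longleftrightarrow> q \<noteq> [] \<and> hd q = a \<and> last q = b \<and> set q \<subseteq> X \<and>
     (\<forall>i. Suc i < length q \<longrightarrow> {q!i, q!Suc i} \<in> F)"

definition plen :: "('a set \<Rightarrow> real) \<Rightarrow> 'a list \<Rightarrow> real" where
  "plen wt q = (\<Sum>i<length q - 1. wt {q!i, q!Suc i})"

definition gdist :: "'a set \<Rightarrow> 'a set set \<Rightarrow> ('a set \<Rightarrow> real) \<Rightarrow> 'a \<Rightarrow> 'a \<Rightarrow> ereal" where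
  "gdist X F wt a b = (INF q\<in>{q. is_walk X F q a b}. ereal (plen wt q))"

definition is_shortest :: "'a set \<Rightarrow> 'a set set \<Rightarrow> ('a set \<Rightarrow> real) \<Rightarrow> 'a list \<Rightarrow> 'a \<Rightarrow> 'a \<Rightarrow> bool" where
  "is_shortest X F wt q a b \<longleftrightarrow> is_walk X F q a b \<and> ereal (plen wt q) = gdist X F wt a b"

text \<open>Edge set of the subgraph of (V,E) induced by X (e.g. G - R is induced by V - R).\<close>
definition ind :: "'a set set \<Rightarrow> 'a set \<Rightarrow> 'a set set" where
  "ind E X = {e\<in>E. e \<subseteq> X}"

definition weighted_graph :: "'a set \<Rightarrow> 'a set set \<Rightarrow> ('a set \<Rightarrow> real) \<Rightarrow> real \<Rightarrow> bool" where
  "weighted_graph V E wt W \<longleftrightarrow> finite V \<and> card V \<ge> 3 \<and>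
     E \<subseteq> {{x,y} | x y. x \<in> V \<and> y \<in> V \<and> x \<noteq> y} \<and> (\<forall>e\<in>E. 1 \<le> wt e \<and> wt e \<le> W)"

definition unique_shortest :: "'a set \<Rightarrow> 'a set set \<Rightarrow> ('a set \<Rightarrow> real) \<Rightarrow> bool" where
  "unique_shortest V E wt \<longleftrightarrow> (\<forall>X F a b q q'. X \<subseteq> V \<longrightarrow> F \<subseteq> ind E X \<longrightarrow>
      is_shortest X F wt q a b \<longrightarrow> is_shortest X F wt q' a b \<longrightarrow> q = q')"

type_synonym 'a tree = "'a set \<times> 'a set set"

definition is_tree_in :: "'a set \<Rightarrow> 'a set set \<Rightarrow> 'a tree \<Rightarrow> bool" where
  "is_tree_in X F T \<longleftrightarrow> fst T \<subseteq> X \<and> snd T \<subseteq> F \<and> (\<forall>e\<in>snd T. e \<subseteq> fst T) \<and>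
     (\<forall>a\<in>fst T. \<forall>b\<in>fst T. \<exists>q. is_walk (fst T) (snd T) q a b) \<and>
     \<not> (\<exists>cy. length cy \<ge> 3 \<and> distinct cy \<and> is_walk (fst T) (snd T) cy (hd cy) (last cy)
            \<and> {last cy, hd cy} \<in> snd T)"

definition dep :: "('a set \<Rightarrow> real) \<Rightarrow> 'a tree \<Rightarrow> 'a \<Rightarrow> 'a \<Rightarrow> ereal" where
  "dep wt T r x = gdist (fst T) (snd T) wt x r"

definition trunk :: "'a set \<Rightarrow> 'a tree \<Rightarrow> 'a set" where
  "trunk S T = {x. \<exists>a\<in>S \<inter> fst T. \<exists>b\<in>S \<inter> fst T. \<exists>q. is_walk (fst T) (snd T) q a b \<and> distinct q \<and> x \<in> set q}"

definition pdeg :: "'a set \<Rightarrow> 'a tree \<Rightarrow> 'a \<Rightarrow> nat" where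
  "pdeg S T v = (if v \<in> trunk S T then card {y\<in>trunk S T. {v,y} \<in> snd T} else 0)"

definition parents :: "'a tree \<Rightarrow> 'a \<Rightarrow> 'a \<Rightarrow> 'a set" where
  "parents T r f = {y. \<exists>q. is_walk (fst T) (snd T) q f r \<and> distinct q \<and> length q \<ge> 2 \<and> q!1 = y}"

definition children :: "'a tree \<Rightarrow> 'a \<Rightarrow> 'a \<Rightarrow> 'a set" where
  "children T r f = {y. {f,y} \<in> snd T \<and> y \<notin> parents T r f}"

text \<open>C is an S-restricted tree cover of G - R (C x is the tree T(x), rooted at x, for x in S).
  k = ln n.\<close>
definition tree_cover :: "'a set \<Rightarrow> 'a set set \<Rightarrow> ('a set \<Rightarrow> real) \<Rightarrow> 'a set \<Rightarrow> 'a set \<Rightarrow> ('a \<Rightarrow> 'a tree) \<Rightarrow> bool" where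
  "tree_cover V E wt R S C \<longleftrightarrow>
     (let n = real (card V); k = ln n in
      S \<subseteq> V - R \<and>
      (\<forall>x\<in>S. is_tree_in (V - R) (ind E (V - R)) (C x) \<and> x \<in> fst (C x)) \<and>
      (\<forall>u\<in>S. \<forall>v\<in>V - R. gdist (V - R) (ind E (V - R)) wt u v < \<infinity> \<longrightarrow>
          (\<exists>x\<in>S. u \<in> fst (C x) \<and> v \<in> fst (C x) \<and>
             dep wt (C x) x u + dep wt (C x) x v \<le> ereal (2*k - 1) * gdist (V - R) (ind E (V - R)) wt u v)) \<and>
      (\<forall>y\<in>V. real (card {x\<in>S. y \<in> fst (C x)}) \<le> k * n powr (1/k) * (ln n + 1)))"

text \<open>TC R S is the fixed (S - R)-restricted tree cover T_R(S) of G - R; T(S) = TC {} S.\<close>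
definition Hi :: "real \<Rightarrow> ('a set \<Rightarrow> 'a set \<Rightarrow> 'a \<Rightarrow> 'a tree) \<Rightarrow> 'a set \<Rightarrow> 'a set \<Rightarrow> 'a set" where
  "Hi s TC R S = {v. \<exists>x\<in>S - R. real (pdeg (S - R) (TC R S x) v) > s}"

text \<open>Wc s TC U i is the child W_(i+1) of U.\<close>
primrec Wc :: "real \<Rightarrow> ('a set \<Rightarrow> 'a set \<Rightarrow> 'a \<Rightarrow> 'a tree) \<Rightarrow> 'a set \<Rightarrow> nat \<Rightarrow> 'a set" where
  "Wc s TC U 0 = Hi s TC {} U"
| "Wc s TC U (Suc i) = Wc s TC U i \<union> Hi s TC (Wc s TC U i) U"

text \<open>U 1, ..., U p is a root-to-node path of the hierarchy tree (with root V).\<close>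
definition hier_path :: "real \<Rightarrow> nat \<Rightarrow> ('a set \<Rightarrow> 'a set \<Rightarrow> 'a \<Rightarrow> 'a tree) \<Rightarrow> 'a set \<Rightarrow> (nat \<Rightarrow> 'a set) \<Rightarrow> nat \<Rightarrow> bool" where
  "hier_path s d TC V U p \<longleftrightarrow> p \<ge> 1 \<and> U 1 = V \<and>
     (\<forall>j. 1 \<le> j \<and> j < p \<longrightarrow> Hi s TC {} (U j) \<noteq> {} \<and> (\<exists>i<d. U (Suc j) = Wc s TC (U j) i))"

text \<open>Index set of the trees of the union cover: tree (i,x) is TC (U (i+1)) (U i) x,
  restricted to U i - U (i+1), rooted at x.\<close>
definition tidx :: "(nat \<Rightarrow> 'a set) \<Rightarrow> nat \<Rightarrow> (nat \<times> 'a) set" where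
  "tidx U p = {(i,x). 1 \<le> i \<and> i \<le> p \<and> x \<in> U i - U (Suc i)}"

definition lev :: "(nat \<Rightarrow> 'a set) \<Rightarrow> nat \<Rightarrow> 'a \<Rightarrow> nat" where
  "lev U p v = Max {l. 1 \<le> l \<and> l \<le> p \<and> v \<in> U l}"

definition Gv :: "'a set \<Rightarrow> (nat \<Rightarrow> 'a set) \<Rightarrow> nat \<Rightarrow> nat \<Rightarrow> 'a set" where
  "Gv V U p i = {v\<in>V. lev U p v \<le> i}"

definition NT :: "('a set \<Rightarrow> 'a set \<Rightarrow> 'a \<Rightarrow> 'a tree) \<Rightarrow> (nat \<Rightarrow> 'a set) \<Rightarrow> nat \<times> 'a \<Rightarrow> 'a \<Rightarrow> 'a set" where
  "NT TC U ix f = (let i = fst ix; x = snd ix; T = TC (U (Suc i)) (U i) x in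
      parents T x f \<union> (children T x f \<inter> trunk (U i - U (Suc i)) T))"

definition VH :: "('a set \<Rightarrow> 'a set \<Rightarrow> 'a \<Rightarrow> 'a tree) \<Rightarrow> (nat \<Rightarrow> 'a set) \<Rightarrow> nat \<Rightarrow> 'a set \<Rightarrow> 'a \<Rightarrow> 'a \<Rightarrow> 'a set" where
  "VH TC U p D s0 t0 = ({s0, t0} \<union>
     (\<Union>f\<in>D. \<Union>ix\<in>{ix\<in>tidx U p. f \<in> fst (TC (U (Suc (fst ix))) (U (fst ix)) (snd ix))}. NT TC U ix f)) - D"

definition far_away :: "'a set \<Rightarrow> 'a set set \<Rightarrow> ('a set \<Rightarrow> real) \<Rightarrow> 'a set \<Rightarrow> real \<Rightarrow> 'a list \<Rightarrow> bool" where
  "far_away X F wt H \<eta> P \<longleftrightarrow> (\<forall>i. 0 < i \<and> i < length P - 1 \<longrightarrow> (\<forall>y\<in>H.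
      \<not> (gdist X F wt (P!i) y \<le> ereal (\<eta> * min (plen wt (take (Suc i) P)) (plen wt (drop i P))))))"

definition same_seg :: "('a set \<Rightarrow> real) \<Rightarrow> real \<Rightarrow> 'a list \<Rightarrow> nat \<Rightarrow> nat \<Rightarrow> bool" where
  "same_seg wt \<eta> P i j \<longleftrightarrow>
     (let L = plen wt P; pre = (\<lambda>m. plen wt (take (Suc m) P)); suf = (\<lambda>m. plen wt (drop m P)) in
      (pre i \<le> L/2 \<and> pre j \<le> L/2 \<and> \<lfloor>log (1+\<eta>) (pre i)\<rfloor> = \<lfloor>log (1+\<eta>) (pre j)\<rfloor>) \<or>
      (suf i < L/2 \<and> suf j < L/2 \<and> \<lfloor>log (1+\<eta>) (suf i)\<rfloor> = \<lfloor>log (1+\<eta>) (suf j)\<rfloor>))"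

definition seg_class :: "('a set \<Rightarrow> real) \<Rightarrow> real \<Rightarrow> 'a list \<Rightarrow> nat \<Rightarrow> nat set" where
  "seg_class wt \<eta> P i = {j. 1 \<le> j \<and> j < length P - 1 \<and> same_seg wt \<eta> P i j}"

definition subpath :: "'a list \<Rightarrow> nat \<Rightarrow> nat \<Rightarrow> 'a list" where
  "subpath P a b = take (Suc b - a) (drop a P)"

definition seg_expath :: "'a set \<Rightarrow> 'a set set \<Rightarrow> ('a set \<Rightarrow> real) \<Rightarrow> (nat \<Rightarrow> 'a set) \<Rightarrow> nat \<Rightarrow> real \<Rightarrow> 'a list \<Rightarrow> bool" where
  "seg_expath V E wt U p \<eta> P \<longleftrightarrow> (\<forall>i. 1 \<le> i \<and> i < length P - 1 \<longrightarrow>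
     (let C = seg_class wt \<eta> P i; a = Min C; b = Max C in
      \<exists>l. 1 \<le> l \<and> l \<le> p \<and>
        is_shortest (Gv V U p l) (ind E (Gv V U p l)) wt (subpath P a b) (P!a) (P!b)))"

end

theory Submission
  imports Defs
begin



lemma plen_Nil[simp]: "plen wt [] = 0" by (simp add: plen_def)
lemma plen_single[simp]: "plen wt [x] = 0" by (simp add: plen_def)
lemma plen_Cons2[simp]: "plen wt (x#y#r) = wt {x,y} + plen wt (y#r)"
proof -
  have "plen wt (x#y#r) = (\<Sum>i<Suc (length r). wt{(x#y#r)!i, (x#y#r)!Suc i})" by (simp add: plen_def)
  also have "... = wt{(x#y#r)!0, (x#y#r)!Suc 0} + (\<Sum>i<length r. wt{(x#y#r)!Suc i, (x#y#r)!Suc (Suc i)})"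
    by (rule sum.lessThan_Suc_shift)
  also have "... = wt {x,y} + plen wt (y#r)" by (simp add: plen_def)
  finally show ?thesis .
qed

lemma is_walk_single[simp]: "is_walk X F [x] a b \<longleftrightarrow> x = a \<and> x = b \<and> x \<in> X"
  unfolding is_walk_def by auto

lemma is_walk_Cons2[simp]: "is_walk X F (x#y#r) a b \<longleftrightarrow> x = a \<and> x \<in> X \<and> {x,y} \<in> F \<and> is_walk X F (y#r) y b"
proof -
  have "(\<forall>i. Suc i < length (x#y#r) \<longrightarrow> {(x#y#r)!i, (x#y#r)!Suc i} \<in> F) \<longleftrightarrow>
        {x,y} \<in> F \<and> (\<forall>i. Suc i < length (y#r) \<longrightarrow> {(y#r)!i, (y#r)!Suc i} \<in> F)"
    (is "?L \<longleftrightarrow> ?R")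
  proof
    assume ?L
    then show ?R by (metis Suc_less_eq length_Cons nth_Cons_0 nth_Cons_Suc zero_less_Suc)
  next
    assume ?R
    show ?L
    proof (intro allI impI)
      fix i assume "Suc i < length (x#y#r)"
      then show "{(x#y#r)!i, (x#y#r)!Suc i} \<in> F" using \<open>?R\<close> by (cases i) auto
    qed
  qed
  then show ?thesis unfolding is_walk_def by auto
qed

lemma walk_ends_aux: "is_walk X F (y # ys) a b \<Longrightarrow> y \<in> X"
  unfolding is_walk_def by auto

lemma is_walk_Cons: "is_walk X F (x # l) a b \<longleftrightarrow> x = a \<and> x \<in> X \<and>
   (l = [] \<and> x = b \<or> l \<noteq> [] \<and> {x, hd l} \<in> F \<and> is_walk X F l (hd l) b)"
  by (cases l) auto

lemma plen_split: "plen wt (xs @ y # ys) = plen wt (xs @ [y]) + plen wt (y # ys)"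
proof (induction xs)
  case Nil then show ?case by simp
next
  case (Cons x xs) then show ?case by (cases xs) auto
qed

lemma is_walk_split: "is_walk X F (xs @ y # ys) a b \<longleftrightarrow> is_walk X F (xs @ [y]) a y \<and> is_walk X F (y # ys) y b"
proof (induction xs arbitrary: a)
  case Nil
  have h: "is_walk X F (y#ys) a b \<Longrightarrow> a = y" unfolding is_walk_def by simp
  show ?case
  proof
    assume w: "is_walk X F ([] @ y # ys) a b"
    then have "a = y" "y \<in> X" using h walk_ends_aux[of X F y ys a b] by simp_all
    moreover have "is_walk X F (y # ys) y b" using w \<open>a = y\<close> by simp
    ultimately show "is_walk X F ([] @ [y]) a y \<and> is_walk X F (y # ys) y b" by simp
  next
    assume h2: "is_walk X F ([] @ [y]) a y \<and> is_walk X F (y # ys) y b"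
    then have "y = a" by simp
    moreover have "is_walk X F (y # ys) y b" using h2 by blast
    ultimately show "is_walk X F ([] @ y # ys) a b" unfolding append_Nil by metis
  qed
next
  case (Cons x xs)
  define h where "h = hd (xs @ [y])"
  have hh: "hd (xs @ y # ys) = h" unfolding h_def by (cases xs) simp_all
  have ne: "xs @ y # ys \<noteq> []" "xs @ [y] \<noteq> []" by simp_all
  have "is_walk X F ((x # xs) @ y # ys) a b \<longleftrightarrow> x = a \<and> x \<in> X \<and> {x,h} \<in> F \<and> is_walk X F (xs @ y # ys) h b"
    using is_walk_Cons[of X F x "xs @ y # ys" a b] hh ne by simp
  moreover have "is_walk X F ((x # xs) @ [y]) a y \<longleftrightarrow> x = a \<and> x \<in> X \<and> {x,h} \<in> F \<and> is_walk X F (xs @ [y]) h y"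
    using is_walk_Cons[of X F x "xs @ [y]" a y] h_def ne by simp
  ultimately show ?case using Cons.IH[of h] by blast
qed

lemma walk_ends: "is_walk X F q a b \<Longrightarrow> q \<noteq> [] \<and> hd q = a \<and> last q = b \<and> set q \<subseteq> X"
  unfolding is_walk_def by auto

lemma is_walk_glue:
  assumes "is_walk X F xs a b" "is_walk X F ys b c"
  shows "is_walk X F (xs @ tl ys) a c" "plen wt (xs @ tl ys) = plen wt xs + plen wt ys"
proof -
  obtain zs where xs: "xs = zs @ [b]" using walk_ends[OF assms(1)]
    by (metis append_butlast_last_id)
  obtain r where ys: "ys = b # r" using walk_ends[OF assms(2)]
    by (metis list.collapse)
  show "is_walk X F (xs @ tl ys) a c" using assms is_walk_split[of X F zs b r a c] xs ys by simp
  show "plen wt (xs @ tl ys) = plen wt xs + plen wt ys" using plen_split[of wt zs b r] xs ys by simp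
qed

lemma walk_rev:
  assumes "is_walk X F q a b"
  shows "is_walk X F (rev q) b a \<and> plen wt (rev q) = plen wt q"
  using assms
proof (induction q arbitrary: a)
  case Nil then show ?case by (simp add: is_walk_def)
next
  case (Cons x q)
  show ?case
  proof (cases q)
    case Nil then show ?thesis using Cons by auto
  next
    case (Cons y r)
    have w: "is_walk X F q y b" "{x,y} \<in> F" "x = a" "x \<in> X" using Cons.prems Cons by auto
    have IH: "is_walk X F (rev q) b y" "plen wt (rev q) = plen wt q" using Cons.IH[OF w(1)] by auto
    have yX: "y \<in> X" using walk_ends[OF w(1)] Cons by auto
    have e: "is_walk X F [y,x] y x" using w yX by (simp add: insert_commute)
    have "rev (x#q) = rev q @ tl [y,x]" by simp
    then show ?thesis using is_walk_glue(1)[OF IH(1) e] is_walk_glue(2)[OF IH(1) e, of wt] IH(2) w Cons by (simp add: insert_commute)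
  qed
qed

lemma walk_take_drop:
  assumes "is_walk X F q a b" "j < length q"
  shows "is_walk X F (take (Suc j) q) a (q!j)" "is_walk X F (drop j q) (q!j) b"
    "plen wt q = plen wt (take (Suc j) q) + plen wt (drop j q)"
proof -
  have q: "q = take j q @ q!j # drop (Suc j) q" using assms(2) by (simp add: id_take_nth_drop)
  have t: "take (Suc j) q = take j q @ [q!j]" using assms(2) by (simp add: take_Suc_conv_app_nth)
  have d: "drop j q = q!j # drop (Suc j) q" using assms(2) by (simp add: Cons_nth_drop_Suc)
  show "is_walk X F (take (Suc j) q) a (q!j)" "is_walk X F (drop j q) (q!j) b"
    using assms(1) is_walk_split[of X F "take j q" "q!j" "drop (Suc j) q" a b] q t d by auto
  show "plen wt q = plen wt (take (Suc j) q) + plen wt (drop j q)"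
    using plen_split[of wt "take j q" "q!j" "drop (Suc j) q"] q t d by metis
qed

lemma plen_nonneg:
  assumes "is_walk X F q a b" "\<forall>e\<in>F. 0 \<le> wt e"
  shows "0 \<le> plen wt q"
  using assms
proof (induction q arbitrary: a)
  case Nil then show ?case by simp
next
  case (Cons x q) then show ?case by (cases q) fastforce+
qed

lemma plen_pos:
  assumes "is_walk X F q a b" "\<forall>e\<in>F. 1 \<le> wt e" "length q \<ge> 2"
  shows "1 \<le> plen wt q"
proof -
  obtain x y r where q: "q = x#y#r" using assms(3)
    by (metis One_nat_def Suc_1 le_Suc_eq length_0_conv length_Cons list.exhaust_sel list.size(3) not_less_eq_eq)
  have "is_walk X F (y#r) y b" "{x,y} \<in> F" using assms(1) q by auto
  moreover have "0 \<le> plen wt (y#r)" using plen_nonneg[OF calculation(1), of wt] assms(2) by force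
  ultimately show ?thesis using q assms(2) by force
qed

lemma walk_mono: "is_walk X F q a b \<Longrightarrow> X \<subseteq> X' \<Longrightarrow> F \<subseteq> F' \<Longrightarrow> is_walk X' F' q a b"
  unfolding is_walk_def by blast

lemma walk_restrict:
  assumes "is_walk X F q a b" "F \<subseteq> E" "set q \<subseteq> Y"
  shows "is_walk Y (ind E Y) q a b"
proof -
  have "\<forall>i. Suc i < length q \<longrightarrow> {q!i, q!Suc i} \<in> ind E Y"
  proof (intro allI impI)
    fix i assume i: "Suc i < length q"
    then have "{q!i, q!Suc i} \<in> F" using assms(1) unfolding is_walk_def by blast
    moreover have "q!i \<in> Y" using i assms(3) by (meson Suc_lessD nth_mem subsetD)
    moreover have "q!Suc i \<in> Y" using i assms(3) by (meson nth_mem subsetD)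
    ultimately show "{q!i, q!Suc i} \<in> ind E Y" using assms(2) unfolding ind_def by blast
  qed
  then show ?thesis using assms unfolding is_walk_def by blast
qed

lemma walk_distinct:
  assumes "is_walk X F q a b" "\<forall>e\<in>F. 0 \<le> wt e"
  shows "\<exists>q'. is_walk X F q' a b \<and> distinct q' \<and> set q' \<subseteq> set q \<and> plen wt q' \<le> plen wt q"
  using assms
proof (induction "length q" arbitrary: q rule: less_induct)
  case less
  show ?case
  proof (cases "distinct q")
    case True then show ?thesis using less.prems by blast
  next
    case False
    then obtain xs ys zs y where q: "q = xs @ [y] @ ys @ [y] @ zs" using not_distinct_decomp by blast
    have w1: "is_walk X F (xs @ [y]) a y" and w2: "is_walk X F (y # ys @ y # zs) y b"
      using less.prems(1) is_walk_split[of X F xs y "ys @ y # zs" a b] q by auto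
    have w3: "is_walk X F ((y # ys) @ [y]) y y" and w4: "is_walk X F (y # zs) y b"
      using w2 is_walk_split[of X F "y#ys" y zs y b] by auto
    have wq: "is_walk X F (xs @ y # zs) a b" using w1 w4 is_walk_split[of X F xs y zs a b] by blast
    have "plen wt q = plen wt (xs @ [y]) + plen wt ((y # ys) @ [y]) + plen wt (y # zs)"
      using q plen_split[of wt xs y "ys @ y # zs"] plen_split[of wt "y#ys" y zs] by simp
    moreover have "0 \<le> plen wt ((y # ys) @ [y])" using plen_nonneg[OF w3 less.prems(2)] .
    ultimately have pl: "plen wt (xs @ y # zs) \<le> plen wt q" using plen_split[of wt xs y zs] by simp
    have "length (xs @ y # zs) < length q" using q by simp
    from less.hyps[OF this wq less.prems(2)] obtain q' where
      "is_walk X F q' a b \<and> distinct q' \<and> set q' \<subseteq> set (xs @ y # zs) \<and> plen wt q' \<le> plen wt (xs @ y # zs)" by blast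
    then show ?thesis using pl q by auto
  qed
qed

lemma gdist_le: "is_walk X F q a b \<Longrightarrow> gdist X F wt a b \<le> ereal (plen wt q)"
  unfolding gdist_def by (rule INF_lower) simp

lemma gdist_ge: "(\<And>q. is_walk X F q a b \<Longrightarrow> r \<le> plen wt q) \<Longrightarrow> ereal r \<le> gdist X F wt a b"
  unfolding gdist_def by (rule INF_greatest) simp

lemma gdist_lt: "gdist X F wt a b < ereal r \<Longrightarrow> \<exists>q. is_walk X F q a b \<and> plen wt q < r"
  unfolding gdist_def by (simp add: INF_less_iff)




lemma floor_log_bounds:
  fixes \<beta> x :: real
  assumes "1 < \<beta>" "0 < x"
  shows "\<beta> powr (real_of_int \<lfloor>log \<beta> x\<rfloor>) \<le> x" "x < \<beta> powr (real_of_int \<lfloor>log \<beta> x\<rfloor> + 1)"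
proof -
  have x: "x = \<beta> powr (log \<beta> x)" using assms by simp
  have "\<beta> powr (real_of_int \<lfloor>log \<beta> x\<rfloor>) \<le> \<beta> powr (log \<beta> x)"
    using assms by (intro powr_mono) auto
  then show "\<beta> powr (real_of_int \<lfloor>log \<beta> x\<rfloor>) \<le> x" using x by simp
  have "\<beta> powr (log \<beta> x) < \<beta> powr (real_of_int \<lfloor>log \<beta> x\<rfloor> + 1)"
    using assms by (intro powr_less_mono) linarith+
  then show "x < \<beta> powr (real_of_int \<lfloor>log \<beta> x\<rfloor> + 1)" using x by simp
qed

lemma seg_bound:
  fixes pre suf :: "nat \<Rightarrow> real" and \<eta> L :: real
  assumes eta: "0 < \<eta>"
    and mono: "pre a \<le> pre z" "pre z \<le> pre b" "suf b \<le> suf z" "suf z \<le> suf a"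
    and pos: "0 < pre a" "0 < suf b"
    and sums: "pre a + suf a = L" "pre z + suf z = L" "pre b + suf b = L"
    and same: "(pre a \<le> L/2 \<and> pre b \<le> L/2 \<and> \<lfloor>log (1+\<eta>) (pre a)\<rfloor> = \<lfloor>log (1+\<eta>) (pre b)\<rfloor>) \<or>
               (suf a < L/2 \<and> suf b < L/2 \<and> \<lfloor>log (1+\<eta>) (suf a)\<rfloor> = \<lfloor>log (1+\<eta>) (suf b)\<rfloor>)"
  shows "pre b - pre a < \<eta> * min (pre z) (suf z)"
  using same
proof
  assume h: "pre a \<le> L/2 \<and> pre b \<le> L/2 \<and> \<lfloor>log (1+\<eta>) (pre a)\<rfloor> = \<lfloor>log (1+\<eta>) (pre b)\<rfloor>"
  define m where "m = real_of_int \<lfloor>log (1+\<eta>) (pre a)\<rfloor>"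
  have b1: "(1+\<eta>) powr m \<le> pre a" using floor_log_bounds(1)[of "1+\<eta>" "pre a"] eta pos m_def by simp
  have b2: "pre b < (1+\<eta>) powr (m+1)" using floor_log_bounds(2)[of "1+\<eta>" "pre b"] eta pos mono h m_def by simp
  have "(1+\<eta>) powr (m+1) = (1+\<eta>) powr m * (1+\<eta>)" using eta by (simp add: powr_add)
  then have "pre b - pre a < \<eta> * (1+\<eta>) powr m" using b1 b2 by (simp add: algebra_simps)
  also have "... \<le> \<eta> * pre z" using b1 mono eta by simp
  finally show ?thesis using h sums mono by (simp add: min_def)
next
  assume h: "suf a < L/2 \<and> suf b < L/2 \<and> \<lfloor>log (1+\<eta>) (suf a)\<rfloor> = \<lfloor>log (1+\<eta>) (suf b)\<rfloor>"
  define m where "m = real_of_int \<lfloor>log (1+\<eta>) (suf b)\<rfloor>"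
  have b1: "(1+\<eta>) powr m \<le> suf b" using floor_log_bounds(1)[of "1+\<eta>" "suf b"] eta pos m_def by simp
  have b2: "suf a < (1+\<eta>) powr (m+1)" using floor_log_bounds(2)[of "1+\<eta>" "suf a"] eta pos mono h m_def by simp
  have "(1+\<eta>) powr (m+1) = (1+\<eta>) powr m * (1+\<eta>)" using eta by (simp add: powr_add)
  then have "suf a - suf b < \<eta> * (1+\<eta>) powr m" using b1 b2 by (simp add: algebra_simps)
  also have "... \<le> \<eta> * suf z" using b1 mono eta by simp
  finally have "suf a - suf b < \<eta> * suf z" .
  moreover have "pre b - pre a = suf a - suf b" using sums by simp
  ultimately show ?thesis using h sums mono by (simp add: min_def)
qed

lemma tree_facts: "is_tree_in X F T \<Longrightarrow> fst T \<subseteq> X \<and> snd T \<subseteq> F \<and> (\<forall>e\<in>snd T. e \<subseteq> fst T)"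
  unfolding is_tree_in_def by simp

lemma tree_cover_tree: "tree_cover V E wt R S C \<Longrightarrow> x \<in> S \<Longrightarrow> is_tree_in (V - R) (ind E (V - R)) (C x) \<and> x \<in> fst (C x)"
  unfolding tree_cover_def Let_def by (elim conjE) blast

lemma tree_cover_stretch: "tree_cover V E wt R S C \<Longrightarrow> u \<in> S \<Longrightarrow> v \<in> V - R \<Longrightarrow> gdist (V - R) (ind E (V - R)) wt u v < \<infinity> \<Longrightarrow>
  (\<exists>x\<in>S. u \<in> fst (C x) \<and> v \<in> fst (C x) \<and>
             dep wt (C x) x u + dep wt (C x) x v \<le> ereal (2*ln (real (card V)) - 1) * gdist (V - R) (ind E (V - R)) wt u v)"
  unfolding tree_cover_def Let_def by (elim conjE) blast

lemma Hi_sub: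
  assumes covers: "\<forall>R S. R \<subseteq> V \<longrightarrow> S \<subseteq> V \<longrightarrow> tree_cover V E wt R (S - R) (TC R S)"
    and "R \<subseteq> V" "S \<subseteq> V" "0 \<le> s"
  shows "Hi s TC R S \<subseteq> V"
proof
  fix v assume "v \<in> Hi s TC R S"
  then obtain x where x: "x \<in> S - R" "real (pdeg (S - R) (TC R S x) v) > s" unfolding Hi_def by blast
  then have "pdeg (S - R) (TC R S x) v \<noteq> 0" using assms(4) by auto
  then have "v \<in> trunk (S - R) (TC R S x)" by (metis pdeg_def)
  then obtain a b q where "is_walk (fst (TC R S x)) (snd (TC R S x)) q a b" "v \<in> set q"
    unfolding trunk_def by blast
  then have v: "v \<in> fst (TC R S x)" by (meson walk_ends subsetD)
  have "tree_cover V E wt R (S - R) (TC R S)" by (rule covers[rule_format, OF assms(2,3)])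
  then have "is_tree_in (V - R) (ind E (V - R)) (TC R S x)" using x(1) tree_cover_tree[of V E wt R "S - R" "TC R S" x] by blast
  then show "v \<in> V" using v tree_facts by blast
qed

lemma Wc_sub:
  assumes covers: "\<forall>R S. R \<subseteq> V \<longrightarrow> S \<subseteq> V \<longrightarrow> tree_cover V E wt R (S - R) (TC R S)"
    and "U0 \<subseteq> V" "0 \<le> s"
  shows "Wc s TC U0 i \<subseteq> V"
proof (induction i)
  case 0 show ?case unfolding Wc.simps by (rule Hi_sub[OF covers empty_subsetI assms(2) assms(3)])
next
  case (Suc i) show ?case unfolding Wc.simps using Hi_sub[OF covers Suc assms(2) assms(3)] Suc by blast
qed

lemma U_sub:
  assumes covers: "\<forall>R S. R \<subseteq> V \<longrightarrow> S \<subseteq> V \<longrightarrow> tree_cover V E wt R (S - R) (TC R S)"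
    and hp: "hier_path s d TC V U p" and "0 \<le> s"
  shows "1 \<le> j \<Longrightarrow> j \<le> p \<Longrightarrow> U j \<subseteq> V"
proof (induction j)
  case 0 then show ?case by simp
next
  case (Suc j)
  show ?case
  proof (cases "j = 0")
    case True then show ?thesis using hp unfolding hier_path_def by simp
  next
    case False
    then have j: "1 \<le> j" "j < p" using Suc by auto
    then obtain i where i: "U (Suc j) = Wc s TC (U j) i" using hp unfolding hier_path_def by blast
    have "U j \<subseteq> V" using Suc.IH j by simp
    then show ?thesis unfolding i by (rule Wc_sub[OF covers _ assms(3)])
  qed
qed




lemma plen_td: "j < length q \<Longrightarrow> plen wt q = plen wt (take (Suc j) q) + plen wt (drop j q)"
proof -
  assume j: "j < length q"
  have q: "q = take j q @ q!j # drop (Suc j) q" using j by (simp add: id_take_nth_drop)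
  have t: "take (Suc j) q = take j q @ [q!j]" using j by (simp add: take_Suc_conv_app_nth)
  have d: "drop j q = q!j # drop (Suc j) q" using j by (simp add: Cons_nth_drop_Suc)
  show ?thesis using plen_split[of wt "take j q" "q!j" "drop (Suc j) q"] q t d by metis
qed

lemma pre_sub:
  assumes "m \<le> n" "n < length P"
  shows "plen wt (take (Suc n) P) = plen wt (take (Suc m) P) + plen wt (subpath P m n)"
proof -
  have "plen wt (take (Suc n) P) = plen wt (take (Suc m) (take (Suc n) P)) + plen wt (drop m (take (Suc n) P))"
    using assms by (intro plen_td) auto
  moreover have "take (Suc m) (take (Suc n) P) = take (Suc m) P" using assms by (simp add: min_def)
  moreover have "drop m (take (Suc n) P) = subpath P m n" unfolding subpath_def by (simp add: drop_take)
  ultimately show ?thesis by simp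
qed

lemma suf_sub:
  assumes "m \<le> n" "n < length P"
  shows "plen wt (drop m P) = plen wt (subpath P m n) + plen wt (drop n P)"
proof -
  have "plen wt (drop m P) = plen wt (take (Suc (n - m)) (drop m P)) + plen wt (drop (n - m) (drop m P))"
    using assms by (intro plen_td) auto
  moreover have "take (Suc (n - m)) (drop m P) = subpath P m n" unfolding subpath_def using assms
    by (simp add: Suc_diff_le)
  moreover have "drop (n - m) (drop m P) = drop n P" using assms by simp
  ultimately show ?thesis by simp
qed

lemma subpath_walk:
  assumes "is_walk X F P a b" "m \<le> n" "n < length P"
  shows "is_walk X F (subpath P m n) (P!m) (P!n)"
proof -
  have w: "is_walk X F (drop m P) (P!m) b" using walk_take_drop(2)[OF assms(1)] assms by simp
  have "n - m < length (drop m P)" using assms by simp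
  from walk_take_drop(1)[OF w this]
  have "is_walk X F (take (Suc (n - m)) (drop m P)) (P!m) ((drop m P)!(n-m))" .
  moreover have "(drop m P)!(n-m) = P!n" using assms by simp
  moreover have "take (Suc (n - m)) (drop m P) = subpath P m n" unfolding subpath_def using assms
    by (simp add: Suc_diff_le)
  ultimately show ?thesis by simp
qed

lemma set_subpath:
  assumes "m \<le> n" "n < length P" "x \<in> set (subpath P m n)"
  shows "\<exists>j. m \<le> j \<and> j \<le> n \<and> x = P!j"
proof -
  obtain t where t: "t < length (subpath P m n)" "x = (subpath P m n)!t" using assms(3) by (auto simp: in_set_conv_nth)
  have "length (subpath P m n) = Suc n - m" using assms unfolding subpath_def by simp
  then have "x = P!(m+t)" "t < Suc n - m" using t assms unfolding subpath_def by auto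
  then show ?thesis by (intro exI[of _ "m+t"]) auto
qed

lemma set_tl_sub: "set (tl xs) \<subseteq> set xs" by (cases xs) auto

lemma NT_parent: "g \<in> parents (TC (U (Suc i)) (U i) w) w f \<Longrightarrow> g \<in> NT TC U (i,w) f"
  by (simp add: NT_def Let_def)

lemma NT_child: "{f,g} \<in> snd (TC (U (Suc i)) (U i) w) \<Longrightarrow> g \<in> trunk (U i - U (Suc i)) (TC (U (Suc i)) (U i) w)
   \<Longrightarrow> g \<in> NT TC U (i,w) f"
  by (auto simp: NT_def Let_def children_def)

lemma H_intro: "f \<in> D \<Longrightarrow> (i,w) \<in> tidx U p \<Longrightarrow> f \<in> fst (TC (U (Suc i)) (U i) w) \<Longrightarrow> g \<in> NT TC U (i,w) f
   \<Longrightarrow> g \<notin> D \<Longrightarrow> g \<in> VH TC U p D s0 t0"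
  unfolding VH_def by force

lemma NT_sub: "is_tree_in X F T \<Longrightarrow> parents T r f \<union> children T r f \<subseteq> fst T"
proof
  fix y assume T: "is_tree_in X F T" and y: "y \<in> parents T r f \<union> children T r f"
  show "y \<in> fst T"
  proof (cases "y \<in> parents T r f")
    case True
    then obtain q where q: "is_walk (fst T) (snd T) q f r" "length q \<ge> 2" "q!1 = y" unfolding parents_def by blast
    then have "y \<in> set q" by (metis Suc_1 Suc_le_lessD nth_mem)
    then show ?thesis using walk_ends[OF q(1)] by blast
  next
    case False
    then have "{f,y} \<in> snd T" using y unfolding children_def by blast
    then show ?thesis using tree_facts[OF T] by blast
  qed
qed




theorem theorem4p3:
  fixes V :: "'a set" and E :: "'a set set" and wt :: "'a set \<Rightarrow> real" and W :: real
    and d :: nat and c :: real and s :: real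
    and TC :: "'a set \<Rightarrow> 'a set \<Rightarrow> 'a \<Rightarrow> 'a tree"
    and U :: "nat \<Rightarrow> 'a set" and p :: nat and D :: "'a set" and s0 t0 u v :: 'a
    and \<epsilon> \<epsilon>3 \<epsilon>4 :: real and P :: "'a list"
  defines "k \<equiv> ln (real (card V))"
  defines "s \<equiv> 4 * exp 1 * real d powr (c + 1) * (ln (real (card V)))\<^sup>2 + 1"
  defines "H \<equiv> VH TC U p D s0 t0"
  defines "\<epsilon>3 \<equiv> \<epsilon> / (2 * real (card H))"
  defines "\<epsilon>4 \<equiv> \<epsilon>3 / (4 * k - 2)"
  assumes graph: "weighted_graph V E wt W"
    and uniq: "unique_shortest V E wt"
    and d2: "d \<ge> 2" and c1: "c \<ge> 1"
    and covers: "\<forall>R S. R \<subseteq> V \<longrightarrow> S \<subseteq> V \<longrightarrow> tree_cover V E wt R (S - R) (TC R S)"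
    and hp: "hier_path s d TC V U p" and Up: "U (Suc p) = {}"
    and D: "D \<subseteq> V" "card D \<le> d"
    and Dlow: "\<forall>f\<in>D. \<forall>ix\<in>tidx U p.
        real (pdeg (U (fst ix) - U (Suc (fst ix))) (TC (U (Suc (fst ix))) (U (fst ix)) (snd ix)) f) \<le> s"
    and q: "s0 \<in> V - D" "t0 \<in> V - D"
    and eps: "0 < \<epsilon>" "\<epsilon> < 1"
    and uv: "u \<in> H" "v \<in> H"
    and P: "is_shortest (V - D) (ind E (V - D)) wt P u v"
    and farP: "far_away (V - D) (ind E (V - D)) wt H \<epsilon>3 P"
  shows "seg_expath V E wt U p \<epsilon>4 P"
proof -
  have finV: "finite V" and cardV: "card V \<ge> 3" and wE: "\<forall>e\<in>E. 1 \<le> wt e"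
    using graph unfolding weighted_graph_def by auto
  have wE0: "\<forall>e\<in>E. 0 \<le> wt e" using wE by force
  have indE: "\<And>X. ind E X \<subseteq> E" unfolding ind_def by auto
  have wI0: "\<And>X. \<forall>e\<in>ind E X. 0 \<le> wt e" using wE0 indE by blast
  have wI1: "\<And>X. \<forall>e\<in>ind E X. 1 \<le> wt e" using wE indE by blast
  have k1: "k > 1/2"
  proof -
    have "exp (1/2::real) < exp 1" by simp
    also have "... \<le> 3" by (rule exp_le)
    also have "3 \<le> real (card V)" using cardV by simp
    finally have "exp (1/2) < real (card V)" .
    moreover have "0 < real (card V)" using cardV by simp
    ultimately have "ln (exp (1/2)) < ln (real (card V))" by (subst ln_less_cancel_iff) auto
    then show ?thesis unfolding k_def by simp
  qed
  have s0: "0 \<le> s"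
  proof -
    have "0 \<le> 4 * exp 1 * real d powr (c + 1) * (ln (real (card V)))\<^sup>2" by simp
    then show ?thesis unfolding s_def by simp
  qed
  have p1: "p \<ge> 1" and U1: "U 1 = V" using hp unfolding hier_path_def by auto
  have Usub: "\<And>j. 1 \<le> j \<Longrightarrow> j \<le> p \<Longrightarrow> U j \<subseteq> V" using U_sub[OF covers hp s0] by blast
  have USsub: "\<And>i. i \<le> p \<Longrightarrow> U (Suc i) \<subseteq> V"
  proof -
    fix i assume ip: "i \<le> p"
    show "U (Suc i) \<subseteq> V"
    proof (cases "Suc i \<le> p")
      case True then show ?thesis using Usub[of "Suc i"] by simp
    next
      case False then have "i = p" using ip by simp
      then show ?thesis using Up by simp
    qed
  qed
  have cover_at: "\<And>i. 1 \<le> i \<Longrightarrow> i \<le> p \<Longrightarrow> tree_cover V E wt (U (Suc i)) (U i - U (Suc i)) (TC (U (Suc i)) (U i))"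
    using covers Usub USsub by blast
  have tree_at: "is_tree_in (V - U (Suc i)) (ind E (V - U (Suc i))) (TC (U (Suc i)) (U i) x) \<and> x \<in> fst (TC (U (Suc i)) (U i) x)"
    if "1 \<le> i" "i \<le> p" "x \<in> U i - U (Suc i)" for i x
    by (rule tree_cover_tree[OF cover_at[OF that(1,2)] that(3)])
  have levf: "1 \<le> lev U p x \<and> lev U p x \<le> p \<and> x \<in> U (lev U p x) \<and> (\<forall>l. 1 \<le> l \<and> l \<le> p \<and> x \<in> U l \<longrightarrow> l \<le> lev U p x)"
    if x: "x \<in> V" for x
  proof -
    let ?L = "{l. 1 \<le> l \<and> l \<le> p \<and> x \<in> U l}"
    have fin: "finite ?L" by (rule finite_subset[of _ "{..p}"]) auto
    have ne: "1 \<in> ?L" using p1 U1 x by simp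
    have "lev U p x \<in> ?L" unfolding lev_def using fin ne by (intro Max_in) auto
    moreover have "\<forall>l\<in>?L. l \<le> lev U p x" unfolding lev_def using Max_ge[OF fin] by blast
    ultimately show ?thesis by auto
  qed
  have Gv_notin: "x \<notin> U (Suc i)" if "x \<in> Gv V U p i" "i \<le> p" for x i
  proof
    assume xU: "x \<in> U (Suc i)"
    have xV: "x \<in> V" "lev U p x \<le> i" using that unfolding Gv_def by auto
    show False
    proof (cases "Suc i \<le> p")
      case True then show False using levf[OF xV(1)] xU xV(2) by force
    next
      case False then have "i = p" using that(2) by simp
      then show False using xU Up by simp
    qed
  qed
  have Gv_sub: "Gv V U p i \<subseteq> V - U (Suc i)" if "i \<le> p" for i
    using Gv_notin[OF _ that] unfolding Gv_def by blast
  have HV: "H \<subseteq> V"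
  proof
    fix y assume "y \<in> H"
    then have "y = s0 \<or> y = t0 \<or> (\<exists>f\<in>D. \<exists>ix\<in>tidx U p. y \<in> NT TC U ix f)"
      unfolding H_def VH_def by blast
    moreover have "y \<in> V" if ex: "\<exists>f\<in>D. \<exists>ix\<in>tidx U p. y \<in> NT TC U ix f"
    proof -
      obtain f ix where ix0: "ix \<in> tidx U p" "y \<in> NT TC U ix f" using ex by blast
      obtain i x where ixe: "ix = (i,x)" by (cases ix)
      have ix: "(i,x) \<in> tidx U p" "y \<in> NT TC U (i,x) f" using ix0 ixe by auto
      then have i: "1 \<le> i" "i \<le> p" "x \<in> U i - U (Suc i)" unfolding tidx_def by auto
      have T: "is_tree_in (V - U (Suc i)) (ind E (V - U (Suc i))) (TC (U (Suc i)) (U i) x)"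
        using tree_at[OF i] by blast
      have "y \<in> fst (TC (U (Suc i)) (U i) x)" using NT_sub[OF T, of x f] ix(2)
        unfolding NT_def Let_def by auto
      then show "y \<in> V" using tree_facts[OF T] by blast
    qed
    ultimately show "y \<in> V" using q by blast
  qed
  have finH: "finite H" using HV finV finite_subset by blast
  have s0H: "s0 \<in> H" using q unfolding H_def VH_def by blast
  have cH: "card H > 0" using finH s0H card_gt_0_iff by blast
  have e3: "\<epsilon>3 > 0" unfolding \<epsilon>3_def using eps cH by simp
  have k2: "4 * k - 2 > 0" using k1 by simp
  have e4: "\<epsilon>4 > 0" unfolding \<epsilon>4_def using e3 k2 by simp
  have e34: "\<epsilon>4 * (4 * k - 2) = \<epsilon>3" unfolding \<epsilon>4_def using k2 by simp
  have Pw: "is_walk (V - D) (ind E (V - D)) P u v" and PL: "ereal (plen wt P) = gdist (V - D) (ind E (V - D)) wt u v"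
    using P unfolding is_shortest_def by auto
  have PV: "set P \<subseteq> V - D" using walk_ends[OF Pw] by blast
  define pre where "pre = (\<lambda>m. plen wt (take (Suc m) P))"
  define suf where "suf = (\<lambda>m. plen wt (drop m P))"
  define L where "L = plen wt P"
  have presuf: "pre m + suf m = L" if "m < length P" for m
    unfolding pre_def suf_def L_def using plen_td[OF that] by simp
  have pre_m: "pre n = pre m + plen wt (subpath P m n)" if "m \<le> n" "n < length P" for m n
    unfolding pre_def using pre_sub[OF that] by simp
  have suf_m: "suf m = plen wt (subpath P m n) + suf n" if "m \<le> n" "n < length P" for m n
    unfolding suf_def using suf_sub[OF that] by simp
  have sub_nn: "0 \<le> plen wt (subpath P m n)" if "m \<le> n" "n < length P" for m n
    using plen_nonneg[OF subpath_walk[OF Pw that] wI0] .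
  show ?thesis unfolding seg_expath_def
  proof (intro allI impI)
    fix i assume i: "1 \<le> i \<and> i < length P - 1"
    define C where "C = seg_class wt \<epsilon>4 P i"
    define a where "a = Min C"
    define b where "b = Max C"
    have Csub: "C \<subseteq> {1..<length P - 1}" unfolding C_def seg_class_def by auto
    have finC: "finite C" using Csub finite_subset by blast
    have iC: "i \<in> C"
    proof -
      have il: "i < length P" using i by linarith
      have "pre i + suf i = L" using presuf[OF il] .
      then have "pre i \<le> L/2 \<or> suf i < L/2" by linarith
      then have "same_seg wt \<epsilon>4 P i i" unfolding same_seg_def Let_def pre_def suf_def L_def by auto
      then show ?thesis unfolding C_def seg_class_def using i by auto
    qed
    have aC: "a \<in> C" and bC: "b \<in> C" unfolding a_def b_def using finC iC by (auto intro: Min_in Max_in)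
    have ai: "a \<le> i" and ib: "i \<le> b" unfolding a_def b_def using finC iC by auto
    have a1: "1 \<le> a" and bl: "b < length P - 1" using aC bC Csub by auto
    have blP: "b < length P" using bl by linarith
    have ssa: "same_seg wt \<epsilon>4 P i a" and ssb: "same_seg wt \<epsilon>4 P i b"
      using aC bC unfolding C_def seg_class_def by auto
    have same: "(pre a \<le> L/2 \<and> pre b \<le> L/2 \<and> \<lfloor>log (1+\<epsilon>4) (pre a)\<rfloor> = \<lfloor>log (1+\<epsilon>4) (pre b)\<rfloor>) \<or>
               (suf a < L/2 \<and> suf b < L/2 \<and> \<lfloor>log (1+\<epsilon>4) (suf a)\<rfloor> = \<lfloor>log (1+\<epsilon>4) (suf b)\<rfloor>)"
    proof (cases "pre i \<le> L/2")
      case True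
      have il: "i < length P" using i by linarith
      then have "\<not> suf i < L/2" using presuf[OF il] True by linarith
      then show ?thesis using True ssa ssb unfolding same_seg_def Let_def pre_def suf_def L_def by auto
    next
      case False
      then show ?thesis using ssa ssb unfolding same_seg_def Let_def pre_def suf_def L_def by auto
    qed
    have apos: "0 < pre a"
    proof -
      have "a < length P" using bl blP ib ai by simp
      from walk_take_drop(1)[OF Pw this]
      have "is_walk (V - D) (ind E (V - D)) (take (Suc a) P) u (P!a)" .
      moreover have "length (take (Suc a) P) \<ge> 2" using a1 bl blP ai ib by simp
      ultimately show ?thesis unfolding pre_def using plen_pos[OF _ wI1] by fastforce
    qed
    have bpos: "0 < suf b"
    proof -
      have "b < length P" using bl blP by simp
      from walk_take_drop(2)[OF Pw this]
      have "is_walk (V - D) (ind E (V - D)) (drop b P) (P!b) v" .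
      moreover have "length (drop b P) \<ge> 2" using bl by simp
      ultimately show ?thesis unfolding suf_def using plen_pos[OF _ wI1] by fastforce
    qed
    define Lseg where "Lseg = plen wt (subpath P a b)"
    have Lseg_eq: "Lseg = pre b - pre a" using pre_m[of a b] ai ib bl blP unfolding Lseg_def by simp
    have segb: "Lseg < \<epsilon>4 * min (pre z) (suf z)" if z: "a \<le> z" "z \<le> b" for z
    proof -
      have zl: "z < length P" using z bl blP by simp
      have m1: "pre a \<le> pre z" using pre_m[of a z] sub_nn[of a z] z zl by simp
      have m2: "pre z \<le> pre b" using pre_m[of z b] sub_nn[of z b] z bl blP by simp
      have m3: "suf b \<le> suf z" using suf_m[of z b] sub_nn[of z b] z bl blP by simp
      have m4: "suf z \<le> suf a" using suf_m[of a z] sub_nn[of a z] z zl by simp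
      have s1: "pre a + suf a = L" using presuf[of a] z zl by simp
      have s2: "pre z + suf z = L" using presuf[of z] zl by simp
      have s3: "pre b + suf b = L" using presuf[of b] bl blP by simp
      have "pre b - pre a < \<epsilon>4 * min (pre z) (suf z)"
        by (rule seg_bound[OF e4 m1 m2 m3 m4 apos bpos s1 s2 s3 same])
      then show ?thesis using Lseg_eq by simp
    qed
    define I where "I = (\<lambda>j. lev U p (P!j)) ` {a..b}"
    define i0 where "i0 = Max I"
    have finI: "finite I" and neI: "I \<noteq> {}" unfolding I_def using ai ib by auto
    obtain z where z: "z \<in> {a..b}" "lev U p (P!z) = i0" using Max_in[OF finI neI] unfolding i0_def I_def by auto
    have PjV: "P!j \<in> V - D" if "j < length P" for j using PV that nth_mem by blast
    have zl0: "z < length P" using z blP by simp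
    have zV: "P!z \<in> V - D" using PjV[OF zl0] .
    have i0p: "1 \<le> i0" "i0 \<le> p" using levf[of "P!z"] zV z by auto
    have inG: "P!j \<in> Gv V U p i0" if "a \<le> j" "j \<le> b" for j
    proof -
      have "lev U p (P!j) \<in> I" unfolding I_def using that by auto
      then have "lev U p (P!j) \<le> i0" unfolding i0_def using Max_ge[OF finI] by blast
      have "j < length P" using that blP by simp
      then show ?thesis unfolding Gv_def using PjV[of j] \<open>lev U p (P!j) \<le> i0\<close> by simp
    qed
    define Gi where "Gi = Gv V U p i0"
    have GiV: "Gi \<subseteq> V" unfolding Gi_def Gv_def by auto
    have setseg: "set (subpath P a' b') \<subseteq> Gi" if sg: "a \<le> a'" "a' \<le> b'" "b' \<le> b" for a' b'
    proof
      fix x assume "x \<in> set (subpath P a' b')"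
      moreover have "b' < length P" using sg blP by simp
      ultimately obtain j where "a' \<le> j" "j \<le> b'" "x = P!j" using set_subpath[of a' b' P x] sg by blast
      then show "x \<in> Gi" using inG[of j] sg unfolding Gi_def by simp
    qed
    have abl: "a \<le> b" "b < length P" using ai ib bl blP by auto
    have walkseg: "is_walk Gi (ind E Gi) (subpath P a b) (P!a) (P!b)"
      by (rule walk_restrict[OF subpath_walk[OF Pw abl] indE setseg]) (use abl in auto)
    have key: "Lseg \<le> plen wt q" if qw: "is_walk Gi (ind E Gi) q (P!a) (P!b)" for q
    proof (rule ccontr)
      assume "\<not> Lseg \<le> plen wt q"
      then have lt: "plen wt q < Lseg" by simp
      have qG: "set q \<subseteq> Gi" using walk_ends[OF qw] by blast
      show False
      proof (cases "\<exists>j0<length q. q!j0 \<in> D")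
        case False
        then have "set q \<subseteq> V - D" using qG GiV by (auto simp: in_set_conv_nth)
        then have qD: "is_walk (V - D) (ind E (V - D)) q (P!a) (P!b)" using walk_restrict[OF qw indE] by blast
        have al: "a < length P" using abl by simp
        have W1: "is_walk (V - D) (ind E (V - D)) (take (Suc a) P) u (P!a)" using walk_take_drop(1)[OF Pw al] .
        have W3: "is_walk (V - D) (ind E (V - D)) (drop b P) (P!b) v" using walk_take_drop(2)[OF Pw abl(2)] .
        note g1 = is_walk_glue[OF W1 qD]
        note g2 = is_walk_glue[OF g1(1) W3]
        have "gdist (V - D) (ind E (V - D)) wt u v \<le> ereal (plen wt ((take (Suc a) P @ tl q) @ tl (drop b P)))"
          by (rule gdist_le[OF g2(1)])
        then have "ereal (plen wt P) \<le> ereal (plen wt ((take (Suc a) P @ tl q) @ tl (drop b P)))" using PL by simp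
        then have "plen wt P \<le> plen wt ((take (Suc a) P @ tl q) @ tl (drop b P))" by simp
        then have "L \<le> pre a + plen wt q + suf b" using g1(2)[of wt] g2(2)[of wt] unfolding L_def pre_def suf_def by simp
        moreover have "L = pre a + Lseg + suf b" using presuf[of a] suf_m[of a b] ai ib bl blP unfolding Lseg_def by simp
        ultimately show False using lt by simp
      next
        case True
        then obtain j0 where j0: "j0 < length q" "q!j0 \<in> D" by blast
        define f where "f = q!j0"
        have qf: "is_walk Gi (ind E Gi) (take (Suc j0) q) (P!a) f" using walk_take_drop(1)[OF qw j0(1)] f_def by simp
        have qfl: "plen wt (take (Suc j0) q) \<le> plen wt q"
          using walk_take_drop(3)[OF qw j0(1), of wt] plen_nonneg[OF walk_take_drop(2)[OF qw j0(1)] wI0] by simp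
        have az: "a \<le> z" "z \<le> b" using z by auto
        have zl: "z < length P" using az abl by simp
        have S1: "is_walk (V - D) (ind E (V - D)) (subpath P a z) (P!a) (P!z)" using subpath_walk[OF Pw az(1) zl] .
        have "set (subpath P a z) \<subseteq> Gi" using setseg[of a z] az by simp
        then have S1G: "is_walk Gi (ind E Gi) (subpath P a z) (P!a) (P!z)" using walk_restrict[OF S1 indE] by blast
        have S1r: "is_walk Gi (ind E Gi) (rev (subpath P a z)) (P!z) (P!a)"
          and S1rl: "plen wt (rev (subpath P a z)) = plen wt (subpath P a z)" using walk_rev[OF S1G] by auto
        define zf where "zf = rev (subpath P a z) @ tl (take (Suc j0) q)"
        have zfw: "is_walk Gi (ind E Gi) zf (P!z) f" unfolding zf_def using is_walk_glue(1)[OF S1r qf] .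
        have zfl: "plen wt zf = plen wt (subpath P a z) + plen wt (take (Suc j0) q)"
          unfolding zf_def using is_walk_glue(2)[OF S1r qf, of wt] S1rl by simp
        have S1l: "plen wt (subpath P a z) \<le> Lseg"
          using pre_m[of a z] pre_m[of z b] sub_nn[of z b] Lseg_eq az bl blP by simp
        have zf2: "plen wt zf < 2 * Lseg" using zfl S1l qfl lt by simp
        define R where "R = U (Suc i0)"
        define S0 where "S0 = U i0"
        have GiR: "Gi \<subseteq> V - R" unfolding Gi_def R_def using Gv_sub i0p by blast
        have zfR: "is_walk (V - R) (ind E (V - R)) zf (P!z) f"
          using walk_restrict[OF zfw indE, of "V - R"] walk_ends[OF zfw] GiR by blast
        have TCov: "tree_cover V E wt R (S0 - R) (TC R S0)" unfolding R_def S0_def using cover_at[OF i0p] by blast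
        have zS: "P!z \<in> S0 - R"
        proof -
          have "P!z \<in> U i0" using levf[of "P!z"] zV z by auto
          moreover have "P!z \<notin> U (Suc i0)" using Gv_notin[of "P!z" i0] inG[of z] az i0p by simp
          ultimately show ?thesis unfolding S0_def R_def by simp
        qed
        have fR: "f \<in> V - R" using walk_ends[OF zfR] by (metis last_in_set subsetD)
        have fD: "f \<in> D" using j0 f_def by simp
        define gd where "gd = gdist (V - R) (ind E (V - R)) wt (P!z) f"
        have gdle: "gd \<le> ereal (plen wt zf)" unfolding gd_def by (rule gdist_le[OF zfR])
        have "ereal 0 \<le> gd" unfolding gd_def by (rule gdist_ge, rule plen_nonneg, assumption, rule wI0)
        then have gd0: "0 \<le> gd" by (simp only: zero_ereal_def)
        have "ereal (plen wt zf) < \<infinity>" by simp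
        with gdle have "gd < \<infinity>" by (rule le_less_trans)
        from tree_cover_stretch[OF TCov zS fR this[unfolded gd_def]]
        obtain w where w: "w \<in> S0 - R" "P!z \<in> fst (TC R S0 w)" "f \<in> fst (TC R S0 w)"
          "dep wt (TC R S0 w) w (P!z) + dep wt (TC R S0 w) w f \<le> ereal (2 * k - 1) * gd"
          unfolding gd_def k_def by blast
        define T where "T = TC R S0 w"
        have Ttree: "is_tree_in (V - R) (ind E (V - R)) T" "w \<in> fst T"
          using tree_cover_tree[OF TCov w(1)] unfolding T_def by auto
        have Tf: "fst T \<subseteq> V - R" "snd T \<subseteq> ind E (V - R)" using tree_facts[OF Ttree(1)] by auto
        have wT0: "\<forall>e\<in>snd T. 0 \<le> wt e" using Tf(2) wI0 by blast
        have wT1: "snd T \<subseteq> E" using Tf(2) indE by blast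
        define B where "B = (2 * k - 1) * plen wt zf"
        have "ereal (2 * k - 1) * gd \<le> ereal (2 * k - 1) * ereal (plen wt zf)"
          using gdle k1 by (intro ereal_mult_left_mono) auto
        then have depB: "dep wt T w (P!z) + dep wt T w f \<le> ereal B" using w(4) unfolding B_def T_def by simp
        have dep0: "0 \<le> dep wt T w x" for x
        proof -
          have "ereal 0 \<le> dep wt T w x" unfolding dep_def by (rule gdist_ge, rule plen_nonneg, assumption, rule wT0)
          then show ?thesis by (simp only: zero_ereal_def)
        qed
        obtain dz where dz: "dep wt T w (P!z) = ereal dz"
          using dep0[of "P!z"] dep0[of f] depB by (cases "dep wt T w (P!z)") auto
        obtain df where df: "dep wt T w f = ereal df"
          using dep0[of "P!z"] dep0[of f] depB by (cases "dep wt T w f") auto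
        have dzf: "dz + df \<le> B" "0 \<le> dz" "0 \<le> df" using depB dz df dep0[of "P!z"] dep0[of f] by auto
        define M where "M = min (pre z) (suf z)"
        have LsM: "Lseg < \<epsilon>4 * M" unfolding M_def using segb az by simp
        have Ls0: "0 \<le> Lseg" unfolding Lseg_def using sub_nn[of a b] ai ib bl blP by simp
        have BM: "B < \<epsilon>3 * M"
        proof -
          have "B \<le> (2 * k - 1) * (2 * Lseg)" unfolding B_def using zf2 k1 by (intro mult_left_mono) auto
          also have "... = (4 * k - 2) * Lseg" by (simp add: algebra_simps)
          also have "... < (4 * k - 2) * (\<epsilon>4 * M)" using LsM k1 by (intro mult_strict_left_mono) auto
          also have "... = \<epsilon>3 * M" using e34 by (simp add: algebra_simps)
          finally show ?thesis .
        qed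
        define \<delta> where "\<delta> = (\<epsilon>3 * M - B) / 2"
        have \<delta>0: "0 < \<delta>" unfolding \<delta>_def using BM by simp
        have B2: "B + 2 * \<delta> = \<epsilon>3 * M" unfolding \<delta>_def by (simp add: field_simps)
        obtain Z0 where Z0: "is_walk (fst T) (snd T) Z0 (P!z) w" "plen wt Z0 < dz + \<delta>"
          using gdist_lt[of "fst T" "snd T" wt "P!z" w "dz + \<delta>"] dz \<delta>0 unfolding dep_def by auto
        obtain Y0 where Y0: "is_walk (fst T) (snd T) Y0 f w" "plen wt Y0 < df + \<delta>"
          using gdist_lt[of "fst T" "snd T" wt f w "df + \<delta>"] df \<delta>0 unfolding dep_def by auto
        obtain Z where Z: "is_walk (fst T) (snd T) Z (P!z) w" "distinct Z" "plen wt Z \<le> plen wt Z0"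
          using walk_distinct[OF Z0(1) wT0] by blast
        obtain Y where Y: "is_walk (fst T) (snd T) Y f w" "distinct Y" "plen wt Y \<le> plen wt Y0"
          using walk_distinct[OF Y0(1) wT0] by blast
        have Z0n: "0 \<le> plen wt Z" using plen_nonneg[OF Z(1) wT0] .
        have Y0n: "0 \<le> plen wt Y" using plen_nonneg[OF Y(1) wT0] .
        have ix: "(i0, w) \<in> tidx U p" unfolding tidx_def using i0p w(1) unfolding S0_def R_def by auto
        have TT: "TC (U (Suc i0)) (U i0) w = T" unfolding T_def R_def S0_def by simp
        have walkD: "is_walk (V - D) (ind E (V - D)) Q x y" if "is_walk (fst T) (snd T) Q x y" "set Q \<inter> D = {}" for Q x y
        proof -
          have "set Q \<subseteq> V - D" using walk_ends[OF that(1)] Tf(1) that(2) by blast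
          then show ?thesis using walk_restrict[OF that(1) wT1] by blast
        qed
        have "\<exists>g\<in>H. \<exists>Q. is_walk (V - D) (ind E (V - D)) Q (P!z) g \<and> plen wt Q < \<epsilon>3 * M"
        proof (cases "\<exists>j<length Z. Z!j \<in> D")
          case True
          define j where "j = (LEAST j. j < length Z \<and> Z!j \<in> D)"
          have j: "j < length Z" "Z!j \<in> D" using LeastI_ex[OF True] unfolding j_def by auto
          have jmin: "Z!t \<notin> D" if tj: "t < j" for t
          proof -
            have "\<not> (t < length Z \<and> Z!t \<in> D)"
              using not_less_Least[of t "\<lambda>j. j < length Z \<and> Z!j \<in> D"] tj unfolding j_def by blast
            moreover have "t < length Z" using tj j(1) by simp
            ultimately show ?thesis by blast
          qed
          have Z0z: "Z!0 = P!z" using walk_ends[OF Z(1)] by (metis hd_conv_nth)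
          have j0': "j \<noteq> 0" proof assume "j = 0" then show False using j(2) Z0z zV by simp qed
          define g where "g = Z!(j-1)"
          have jl: "j - 1 < length Z" using j by simp
          have pw: "is_walk (fst T) (snd T) (take (Suc (j-1)) Z) (P!z) g"
            using walk_take_drop(1)[OF Z(1) jl] g_def by simp
          have pl: "plen wt (take (Suc (j-1)) Z) \<le> plen wt Z"
            using walk_take_drop(3)[OF Z(1) jl, of wt] plen_nonneg[OF walk_take_drop(2)[OF Z(1) jl] wT0] by simp
          have pD: "set (take (Suc (j-1)) Z) \<inter> D = {}"
            using jmin j0' by (auto simp: in_set_conv_nth)
          have gD: "g \<notin> D" using jmin j0' g_def by simp
          have "Suc (j-1) < length Z" using j j0' by simp
          then have edge: "{Z!(j-1), Z!Suc (j-1)} \<in> snd T" using Z(1) unfolding is_walk_def by blast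
          then have edge': "{Z!j, g} \<in> snd T" using j0' g_def by (simp add: insert_commute)
          have fT: "Z!j \<in> fst T" using walk_ends[OF Z(1)] j by (meson nth_mem subsetD)
          have gZ: "g \<in> set Z" using jl g_def by simp
          have zT: "P!z \<in> (U i0 - U (Suc i0)) \<inter> fst T" using zS w(2) unfolding S0_def R_def T_def by simp
          have wT: "w \<in> (U i0 - U (Suc i0)) \<inter> fst T" using w(1) Ttree(2) unfolding S0_def R_def by simp
          have gtr: "g \<in> trunk (U i0 - U (Suc i0)) T"
            unfolding trunk_def using zT wT Z(1) Z(2) gZ by blast
          have "g \<in> NT TC U (i0, w) (Z!j)" using NT_child[of "Z!j" g TC U i0 w] edge' gtr TT by simp
          then have gH: "g \<in> H" unfolding H_def using H_intro[OF j(2) ix _ _ gD] fT TT by simp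
          have "plen wt (take (Suc (j-1)) Z) < \<epsilon>3 * M"
            using pl Z(3) Z0(2) dzf B2 \<delta>0 by linarith
          then show ?thesis using gH walkD[OF pw pD] by blast
        next
          case False
          have Yne: "Y \<noteq> []" using walk_ends[OF Y(1)] by blast
          have Y0f: "Y!0 = f" using walk_ends[OF Y(1)] by (metis hd_conv_nth)
          have Ylast: "Y!(length Y - 1) = w" using walk_ends[OF Y(1)] by (metis last_conv_nth)
          have Zlast: "Z!(length Z - 1) = w" using walk_ends[OF Z(1)] by (metis last_conv_nth)
          have Zne: "Z \<noteq> []" using walk_ends[OF Z(1)] by blast
          have wD: "w \<notin> D" using False Zlast Zne by (metis diff_less length_greater_0_conv zero_less_one)
          define ts where "ts = {t. t < length Y \<and> Y!t \<in> D}"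
          define t where "t = Max ts"
          have fints: "finite ts" unfolding ts_def by simp
          have ts0: "0 \<in> ts" unfolding ts_def using Yne Y0f fD by simp
          have "t \<in> ts" unfolding t_def using Max_in[OF fints] ts0 by blast
          then have t: "t < length Y" "Y!t \<in> D" unfolding ts_def by auto
          have tmax: "Y!t' \<notin> D" if tt: "t < t'" "t' < length Y" for t'
          proof
            assume "Y!t' \<in> D"
            then have "t' \<in> ts" unfolding ts_def using tt by simp
            then have "t' \<le> t" unfolding t_def using Max_ge[OF fints] by blast
            then show False using tt by simp
          qed
          have tl1: "Suc t < length Y"
          proof (rule ccontr)
            assume "\<not> Suc t < length Y"
            then have "t = length Y - 1" using t by simp
            then show False using t Ylast wD by simp
          qed
          define g where "g = Y!(Suc t)"
          have Yd: "is_walk (fst T) (snd T) (drop (Suc t) Y) g w" using walk_take_drop(2)[OF Y(1) tl1] g_def by simp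
          have Ydl: "plen wt (drop (Suc t) Y) \<le> plen wt Y"
            using walk_take_drop(3)[OF Y(1) tl1, of wt] plen_nonneg[OF walk_take_drop(1)[OF Y(1) tl1] wT0] by simp
          have Ydr: "is_walk (fst T) (snd T) (rev (drop (Suc t) Y)) w g" "plen wt (rev (drop (Suc t) Y)) = plen wt (drop (Suc t) Y)"
            using walk_rev[OF Yd] by auto
          define Q where "Q = Z @ tl (rev (drop (Suc t) Y))"
          have Qw: "is_walk (fst T) (snd T) Q (P!z) g" unfolding Q_def by (rule is_walk_glue(1)[OF Z(1) Ydr(1)])
          have Ql: "plen wt Q = plen wt Z + plen wt (drop (Suc t) Y)"
            unfolding Q_def using is_walk_glue(2)[OF Z(1) Ydr(1), of wt] Ydr(2) by simp
          have ZD: "set Z \<inter> D = {}" using False by (auto simp: in_set_conv_nth)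
          have YdD: "set (drop (Suc t) Y) \<inter> D = {}" using tmax by (auto simp: in_set_conv_nth)
          have QD: "set Q \<inter> D = {}" unfolding Q_def using ZD YdD set_tl_sub[of "rev (drop (Suc t) Y)"] by auto
          have gD: "g \<notin> D" using tmax tl1 g_def by simp
          have par: "g \<in> parents T w (Y!t)"
          proof -
            have "is_walk (fst T) (snd T) (drop t Y) (Y!t) w" using walk_take_drop(2)[OF Y(1) t(1)] .
            moreover have "distinct (drop t Y)" using Y(2) by simp
            moreover have "length (drop t Y) \<ge> 2" using tl1 by simp
            moreover have "(drop t Y)!1 = g" using tl1 g_def by simp
            ultimately show ?thesis unfolding parents_def by blast
          qed
          have fT: "Y!t \<in> fst T" using walk_ends[OF Y(1)] t by (meson nth_mem subsetD)
          have "g \<in> NT TC U (i0, w) (Y!t)" using NT_parent[of g TC U i0 w "Y!t"] par TT by simp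
          then have gH: "g \<in> H" unfolding H_def using H_intro[OF t(2) ix _ _ gD] fT TT by simp
          have "plen wt Q < \<epsilon>3 * M" using Ql Ydl Z(3) Z0(2) Y(3) Y0(2) dzf B2 \<delta>0 by linarith
          then show ?thesis using gH walkD[OF Qw QD] by blast
        qed
        then obtain g Q where g: "g \<in> H" "is_walk (V - D) (ind E (V - D)) Q (P!z) g" "plen wt Q < \<epsilon>3 * M" by blast
        have "gdist (V - D) (ind E (V - D)) wt (P!z) g \<le> ereal (\<epsilon>3 * M)"
          using gdist_le[OF g(2), of wt] g(3) by (meson ereal_less_eq(3) less_imp_le order_trans)
        moreover have "0 < z" "z < length P - 1" using az a1 bl blP by auto
        ultimately show False using farP g(1) unfolding far_away_def M_def pre_def suf_def by blast
      qed
    qed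
    have "is_shortest Gi (ind E Gi) wt (subpath P a b) (P!a) (P!b)"
      unfolding is_shortest_def
    proof (intro conjI walkseg antisym)
      show "ereal (plen wt (subpath P a b)) \<le> gdist Gi (ind E Gi) wt (P!a) (P!b)"
        using gdist_ge[of Gi "ind E Gi" "P!a" "P!b" Lseg wt] key unfolding Lseg_def by blast
      show "gdist Gi (ind E Gi) wt (P!a) (P!b) \<le> ereal (plen wt (subpath P a b))" by (rule gdist_le[OF walkseg])
    qed
    then have ex: "\<exists>l. 1 \<le> l \<and> l \<le> p \<and> is_shortest (Gv V U p l) (ind E (Gv V U p l)) wt (subpath P a b) (P ! a) (P ! b)"
      using i0p unfolding Gi_def by blast
    show "let C = seg_class wt \<epsilon>4 P i; a = Min C; b = Max C
       in \<exists>l. 1 \<le> l \<and> l \<le> p \<and> is_shortest (Gv V U p l) (ind E (Gv V U p l)) wt (subpath P a b) (P ! a) (P ! b)"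
      unfolding Let_def using ex unfolding a_def b_def C_def by simp
  qed
qed


end
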